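(* Under the hypotheses of Lemma 2.2, let $\varphi(U)=\phi(U)-\phi(I)U+[T,U]$ with $T=P_1\phi(P_1)P_2+P_2\phi(P_2)P_1$. Then for all $U_{ij}\in\mathcal{U}_{ij}$ ($i,j=1,2$): (1) $\varphi(U_{11})\in\mathcal{U}_{11}$; (2) $\varphi(U_{22})\in\mathcal{U}_{22}$; (3) $P_1\varphi(U_{12})P_1=P_2\varphi(U_{12})P_2=0$; (4) $P_1\varphi(U_{21})P_1=P_2\varphi(U_{21})P_2=0$.
   Context: $\mathcal{U}=\begin{pmatrix}\mathcal{A}&\mathcal{M}\\ \mathcal{N}&\mathcal{B}\end{pmatrix}$ is a generalized matrix ring: $\mathcal{A},\mathcal{B}$ unital 2-torsion free rings, $\mathcal{M}$ a unital $(\mathcal{A},\mathcal{B})$-bimodule faithful on both sides, $\mathcal{N}$ a unital $(\mathcal{B},\mathcal{A})$-bimodule, with bimodule pairings $MN\in\mathcal{A}$, $NM\in\mathcal{B}$ satisfying $(MN)M'=M(NM')$, $(NM)N'=N(MN')$; $\mathcal{U}$ consists of $2\times2$ matrices with usual matrix operations and identity $I$. The hypotheses of Lemma 2.2: $\phi:\mathcal{U}\to\mathcal{U}$ is additive and $\phi(U)\circ V+U\circ\phi(V)=0$ whenever $UV=VU=0$. $X\circ Y=XY+YX$, $[X,Y]=XY-YX$. $P_1=\mathrm{diag}(I_{\mathcal{A}},0)$, $P_2=\mathrm{diag}(0,I_{\mathcal{B}})$, and $\mathcal{U}_{ij}=P_i\mathcal{U}P_j$. *)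

theory Defs
  imports Main
begin

text \<open>Generalized matrix ring U = (A M; N B).  Elements are quadruples.\<close>

datatype ('a,'m,'n,'b) gm = GM (g11: 'a) (g12: 'm) (g21: 'n) (g22: 'b)

instantiation gm :: (ab_group_add, ab_group_add, ab_group_add, ab_group_add) ab_group_add
begin
definition "0 = GM 0 0 0 0"
definition "X + Y = GM (g11 X + g11 Y) (g12 X + g12 Y) (g21 X + g21 Y) (g22 X + g22 Y)"
definition "- X = GM (- g11 X) (- g12 X) (- g21 X) (- g22 X)"
definition "X - Y = GM (g11 X - g11 Y) (g12 X - g12 Y) (g21 X - g21 Y) (g22 X - g22 Y)"
instance
  by standard (auto simp: zero_gm_def plus_gm_def uminus_gm_def minus_gm_def
                          algebra_simps intro: gm.expand)
end

record ('a,'m,'n,'b) gmops =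
  actAM :: "'a \<Rightarrow> 'm \<Rightarrow> 'm"
  actMB :: "'m \<Rightarrow> 'b \<Rightarrow> 'm"
  actBN :: "'b \<Rightarrow> 'n \<Rightarrow> 'n"
  actNA :: "'n \<Rightarrow> 'a \<Rightarrow> 'n"
  pairMN :: "'m \<Rightarrow> 'n \<Rightarrow> 'a"
  pairNM :: "'n \<Rightarrow> 'm \<Rightarrow> 'b"

definition two_torsion_free :: "'r::ab_group_add itself \<Rightarrow> bool" where
  "two_torsion_free _ \<longleftrightarrow> (\<forall>x::'r. x + x = 0 \<longrightarrow> x = 0)"

definition gen_matrix_ring :: "('a::ring_1,'m::ab_group_add,'n::ab_group_add,'b::ring_1) gmops \<Rightarrow> bool" where
  "gen_matrix_ring R \<longleftrightarrow>
    two_torsion_free TYPE('a) \<and> two_torsion_free TYPE('b) \<and>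
    \<comment> \<open>M is a unital (A,B)-bimodule\<close>
    (\<forall>a a' m. actAM R (a + a') m = actAM R a m + actAM R a' m) \<and>
    (\<forall>a m m'. actAM R a (m + m') = actAM R a m + actAM R a m') \<and>
    (\<forall>a a' m. actAM R (a * a') m = actAM R a (actAM R a' m)) \<and>
    (\<forall>m. actAM R 1 m = m) \<and>
    (\<forall>m b b'. actMB R m (b + b') = actMB R m b + actMB R m b') \<and>
    (\<forall>m m' b. actMB R (m + m') b = actMB R m b + actMB R m' b) \<and>
    (\<forall>m b b'. actMB R m (b * b') = actMB R (actMB R m b) b') \<and>
    (\<forall>m. actMB R m 1 = m) \<and>
    (\<forall>a m b. actMB R (actAM R a m) b = actAM R a (actMB R m b)) \<and>
    \<comment> \<open>N is a unital (B,A)-bimodule\<close>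
    (\<forall>b b' n. actBN R (b + b') n = actBN R b n + actBN R b' n) \<and>
    (\<forall>b n n'. actBN R b (n + n') = actBN R b n + actBN R b n') \<and>
    (\<forall>b b' n. actBN R (b * b') n = actBN R b (actBN R b' n)) \<and>
    (\<forall>n. actBN R 1 n = n) \<and>
    (\<forall>n a a'. actNA R n (a + a') = actNA R n a + actNA R n a') \<and>
    (\<forall>n n' a. actNA R (n + n') a = actNA R n a + actNA R n' a) \<and>
    (\<forall>n a a'. actNA R n (a * a') = actNA R (actNA R n a) a') \<and>
    (\<forall>n. actNA R n 1 = n) \<and>
    (\<forall>b n a. actNA R (actBN R b n) a = actBN R b (actNA R n a)) \<and>
    \<comment> \<open>M faithful as left A-module and as right B-module\<close>
    (\<forall>a. (\<forall>m. actAM R a m = 0) \<longrightarrow> a = 0) \<and>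
    (\<forall>b. (\<forall>m. actMB R m b = 0) \<longrightarrow> b = 0) \<and>
    \<comment> \<open>pairing M x N -> A is an (A,A)-bimodule map, B-balanced\<close>
    (\<forall>m m' n. pairMN R (m + m') n = pairMN R m n + pairMN R m' n) \<and>
    (\<forall>m n n'. pairMN R m (n + n') = pairMN R m n + pairMN R m n') \<and>
    (\<forall>a m n. pairMN R (actAM R a m) n = a * pairMN R m n) \<and>
    (\<forall>m n a. pairMN R m (actNA R n a) = pairMN R m n * a) \<and>
    (\<forall>m b n. pairMN R (actMB R m b) n = pairMN R m (actBN R b n)) \<and>
    \<comment> \<open>pairing N x M -> B is a (B,B)-bimodule map, A-balanced\<close>
    (\<forall>n n' m. pairNM R (n + n') m = pairNM R n m + pairNM R n' m) \<and>
    (\<forall>n m m'. pairNM R n (m + m') = pairNM R n m + pairNM R n m') \<and>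
    (\<forall>b n m. pairNM R (actBN R b n) m = b * pairNM R n m) \<and>
    (\<forall>n m b. pairNM R n (actMB R m b) = pairNM R n m * b) \<and>
    (\<forall>n a m. pairNM R (actNA R n a) m = pairNM R n (actAM R a m)) \<and>
    \<comment> \<open>(MN)M' = M(NM'), (NM)N' = N(MN')\<close>
    (\<forall>m n m'. actAM R (pairMN R m n) m' = actMB R m (pairNM R n m')) \<and>
    (\<forall>n m n'. actBN R (pairNM R n m) n' = actNA R n (pairMN R m n'))"

definition gmul :: "('a::ring_1,'m::ab_group_add,'n::ab_group_add,'b::ring_1) gmops \<Rightarrow>
    ('a,'m,'n,'b) gm \<Rightarrow> ('a,'m,'n,'b) gm \<Rightarrow> ('a,'m,'n,'b) gm" where
  "gmul R X Y = GM
     (g11 X * g11 Y + pairMN R (g12 X) (g21 Y))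
     (actAM R (g11 X) (g12 Y) + actMB R (g12 X) (g22 Y))
     (actBN R (g22 X) (g21 Y) + actNA R (g21 X) (g11 Y))
     (pairNM R (g21 X) (g12 Y) + g22 X * g22 Y)"

definition gI :: "('a::ring_1,'m::ab_group_add,'n::ab_group_add,'b::ring_1) gm" where
  "gI = GM 1 0 0 1"

definition gP1 :: "('a::ring_1,'m::ab_group_add,'n::ab_group_add,'b::ring_1) gm" where
  "gP1 = GM 1 0 0 0"

definition gP2 :: "('a::ring_1,'m::ab_group_add,'n::ab_group_add,'b::ring_1) gm" where
  "gP2 = GM 0 0 0 1"

definition jordan where "jordan R X Y = gmul R X Y + gmul R Y X"
definition lie where "lie R X Y = gmul R X Y - gmul R Y X"

definition corner where "corner R P Q = {gmul R (gmul R P X) Q | X. True}"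

end

theory Submission imports Defs begin

locale gmr = fixes R :: "('a::ring_1,'m::ab_group_add,'n::ab_group_add,'b::ring_1) gmops"
  assumes G: "gen_matrix_ring R"
begin
lemmas ax = G[unfolded gen_matrix_ring_def two_torsion_free_def]

lemmas tt1 = ax[THEN conjunct1]
lemmas tt2 = ax[THEN conjunct2, THEN conjunct1]
lemmas AM_addL = ax[THEN conjunct2, THEN conjunct2, THEN conjunct1]
lemmas AM_addR = ax[THEN conjunct2, THEN conjunct2, THEN conjunct2, THEN conjunct1]
lemmas AM_mult = ax[THEN conjunct2, THEN conjunct2, THEN conjunct2, THEN conjunct2, THEN conjunct1]
lemmas AM_one = ax[THEN conjunct2, THEN conjunct2, THEN conjunct2, THEN conjunct2, THEN conjunct2, THEN conjunct1]
lemmas MB_addR = ax[THEN conjunct2, THEN conjunct2, THEN conjunct2, THEN conjunct2, THEN conjunct2, THEN conjunct2, THEN conjunct1]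
lemmas MB_addL = ax[THEN conjunct2, THEN conjunct2, THEN conjunct2, THEN conjunct2, THEN conjunct2, THEN conjunct2, THEN conjunct2, THEN conjunct1]
lemmas MB_mult = ax[THEN conjunct2, THEN conjunct2, THEN conjunct2, THEN conjunct2, THEN conjunct2, THEN conjunct2, THEN conjunct2, THEN conjunct2, THEN conjunct1]
lemmas MB_one = ax[THEN conjunct2, THEN conjunct2, THEN conjunct2, THEN conjunct2, THEN conjunct2, THEN conjunct2, THEN conjunct2, THEN conjunct2, THEN conjunct2, THEN conjunct1]
lemmas AMB = ax[THEN conjunct2, THEN conjunct2, THEN conjunct2, THEN conjunct2, THEN conjunct2, THEN conjunct2, THEN conjunct2, THEN conjunct2, THEN conjunct2, THEN conjunct2, THEN conjunct1]
lemmas BN_addL = ax[THEN conjunct2, THEN conjunct2, THEN conjunct2, THEN conjunct2, THEN conjunct2, THEN conjunct2, THEN conjunct2, THEN conjunct2, THEN conjunct2, THEN conjunct2, THEN conjunct2, THEN conjunct1]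
lemmas BN_addR = ax[THEN conjunct2, THEN conjunct2, THEN conjunct2, THEN conjunct2, THEN conjunct2, THEN conjunct2, THEN conjunct2, THEN conjunct2, THEN conjunct2, THEN conjunct2, THEN conjunct2, THEN conjunct2, THEN conjunct1]
lemmas BN_mult = ax[THEN conjunct2, THEN conjunct2, THEN conjunct2, THEN conjunct2, THEN conjunct2, THEN conjunct2, THEN conjunct2, THEN conjunct2, THEN conjunct2, THEN conjunct2, THEN conjunct2, THEN conjunct2, THEN conjunct2, THEN conjunct1]
lemmas BN_one = ax[THEN conjunct2, THEN conjunct2, THEN conjunct2, THEN conjunct2, THEN conjunct2, THEN conjunct2, THEN conjunct2, THEN conjunct2, THEN conjunct2, THEN conjunct2, THEN conjunct2, THEN conjunct2, THEN conjunct2, THEN conjunct2, THEN conjunct1]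
lemmas NA_addR = ax[THEN conjunct2, THEN conjunct2, THEN conjunct2, THEN conjunct2, THEN conjunct2, THEN conjunct2, THEN conjunct2, THEN conjunct2, THEN conjunct2, THEN conjunct2, THEN conjunct2, THEN conjunct2, THEN conjunct2, THEN conjunct2, THEN conjunct2, THEN conjunct1]
lemmas NA_addL = ax[THEN conjunct2, THEN conjunct2, THEN conjunct2, THEN conjunct2, THEN conjunct2, THEN conjunct2, THEN conjunct2, THEN conjunct2, THEN conjunct2, THEN conjunct2, THEN conjunct2, THEN conjunct2, THEN conjunct2, THEN conjunct2, THEN conjunct2, THEN conjunct2, THEN conjunct1]
lemmas NA_mult = ax[THEN conjunct2, THEN conjunct2, THEN conjunct2, THEN conjunct2, THEN conjunct2, THEN conjunct2, THEN conjunct2, THEN conjunct2, THEN conjunct2, THEN conjunct2, THEN conjunct2, THEN conjunct2, THEN conjunct2, THEN conjunct2, THEN conjunct2, THEN conjunct2, THEN conjunct2, THEN conjunct1]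
lemmas NA_one = ax[THEN conjunct2, THEN conjunct2, THEN conjunct2, THEN conjunct2, THEN conjunct2, THEN conjunct2, THEN conjunct2, THEN conjunct2, THEN conjunct2, THEN conjunct2, THEN conjunct2, THEN conjunct2, THEN conjunct2, THEN conjunct2, THEN conjunct2, THEN conjunct2, THEN conjunct2, THEN conjunct2, THEN conjunct1]
lemmas BNA = ax[THEN conjunct2, THEN conjunct2, THEN conjunct2, THEN conjunct2, THEN conjunct2, THEN conjunct2, THEN conjunct2, THEN conjunct2, THEN conjunct2, THEN conjunct2, THEN conjunct2, THEN conjunct2, THEN conjunct2, THEN conjunct2, THEN conjunct2, THEN conjunct2, THEN conjunct2, THEN conjunct2, THEN conjunct2, THEN conjunct1]
lemmas faithA = ax[THEN conjunct2, THEN conjunct2, THEN conjunct2, THEN conjunct2, THEN conjunct2, THEN conjunct2, THEN conjunct2, THEN conjunct2, THEN conjunct2, THEN conjunct2, THEN conjunct2, THEN conjunct2, THEN conjunct2, THEN conjunct2, THEN conjunct2, THEN conjunct2, THEN conjunct2, THEN conjunct2, THEN conjunct2, THEN conjunct2, THEN conjunct1]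
lemmas faithB = ax[THEN conjunct2, THEN conjunct2, THEN conjunct2, THEN conjunct2, THEN conjunct2, THEN conjunct2, THEN conjunct2, THEN conjunct2, THEN conjunct2, THEN conjunct2, THEN conjunct2, THEN conjunct2, THEN conjunct2, THEN conjunct2, THEN conjunct2, THEN conjunct2, THEN conjunct2, THEN conjunct2, THEN conjunct2, THEN conjunct2, THEN conjunct2, THEN conjunct1]
lemmas PMN_addL = ax[THEN conjunct2, THEN conjunct2, THEN conjunct2, THEN conjunct2, THEN conjunct2, THEN conjunct2, THEN conjunct2, THEN conjunct2, THEN conjunct2, THEN conjunct2, THEN conjunct2, THEN conjunct2, THEN conjunct2, THEN conjunct2, THEN conjunct2, THEN conjunct2, THEN conjunct2, THEN conjunct2, THEN conjunct2, THEN conjunct2, THEN conjunct2, THEN conjunct2, THEN conjunct1]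
lemmas PMN_addR = ax[THEN conjunct2, THEN conjunct2, THEN conjunct2, THEN conjunct2, THEN conjunct2, THEN conjunct2, THEN conjunct2, THEN conjunct2, THEN conjunct2, THEN conjunct2, THEN conjunct2, THEN conjunct2, THEN conjunct2, THEN conjunct2, THEN conjunct2, THEN conjunct2, THEN conjunct2, THEN conjunct2, THEN conjunct2, THEN conjunct2, THEN conjunct2, THEN conjunct2, THEN conjunct2, THEN conjunct1]
lemmas PMN_AM = ax[THEN conjunct2, THEN conjunct2, THEN conjunct2, THEN conjunct2, THEN conjunct2, THEN conjunct2, THEN conjunct2, THEN conjunct2, THEN conjunct2, THEN conjunct2, THEN conjunct2, THEN conjunct2, THEN conjunct2, THEN conjunct2, THEN conjunct2, THEN conjunct2, THEN conjunct2, THEN conjunct2, THEN conjunct2, THEN conjunct2, THEN conjunct2, THEN conjunct2, THEN conjunct2, THEN conjunct2, THEN conjunct1]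
lemmas PMN_NA = ax[THEN conjunct2, THEN conjunct2, THEN conjunct2, THEN conjunct2, THEN conjunct2, THEN conjunct2, THEN conjunct2, THEN conjunct2, THEN conjunct2, THEN conjunct2, THEN conjunct2, THEN conjunct2, THEN conjunct2, THEN conjunct2, THEN conjunct2, THEN conjunct2, THEN conjunct2, THEN conjunct2, THEN conjunct2, THEN conjunct2, THEN conjunct2, THEN conjunct2, THEN conjunct2, THEN conjunct2, THEN conjunct2, THEN conjunct1]
lemmas PMN_bal = ax[THEN conjunct2, THEN conjunct2, THEN conjunct2, THEN conjunct2, THEN conjunct2, THEN conjunct2, THEN conjunct2, THEN conjunct2, THEN conjunct2, THEN conjunct2, THEN conjunct2, THEN conjunct2, THEN conjunct2, THEN conjunct2, THEN conjunct2, THEN conjunct2, THEN conjunct2, THEN conjunct2, THEN conjunct2, THEN conjunct2, THEN conjunct2, THEN conjunct2, THEN conjunct2, THEN conjunct2, THEN conjunct2, THEN conjunct2, THEN conjunct1]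
lemmas PNM_addL = ax[THEN conjunct2, THEN conjunct2, THEN conjunct2, THEN conjunct2, THEN conjunct2, THEN conjunct2, THEN conjunct2, THEN conjunct2, THEN conjunct2, THEN conjunct2, THEN conjunct2, THEN conjunct2, THEN conjunct2, THEN conjunct2, THEN conjunct2, THEN conjunct2, THEN conjunct2, THEN conjunct2, THEN conjunct2, THEN conjunct2, THEN conjunct2, THEN conjunct2, THEN conjunct2, THEN conjunct2, THEN conjunct2, THEN conjunct2, THEN conjunct2, THEN conjunct1]
lemmas PNM_addR = ax[THEN conjunct2, THEN conjunct2, THEN conjunct2, THEN conjunct2, THEN conjunct2, THEN conjunct2, THEN conjunct2, THEN conjunct2, THEN conjunct2, THEN conjunct2, THEN conjunct2, THEN conjunct2, THEN conjunct2, THEN conjunct2, THEN conjunct2, THEN conjunct2, THEN conjunct2, THEN conjunct2, THEN conjunct2, THEN conjunct2, THEN conjunct2, THEN conjunct2, THEN conjunct2, THEN conjunct2, THEN conjunct2, THEN conjunct2, THEN conjunct2, THEN conjunct2, THEN conjunct1]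
lemmas PNM_BN = ax[THEN conjunct2, THEN conjunct2, THEN conjunct2, THEN conjunct2, THEN conjunct2, THEN conjunct2, THEN conjunct2, THEN conjunct2, THEN conjunct2, THEN conjunct2, THEN conjunct2, THEN conjunct2, THEN conjunct2, THEN conjunct2, THEN conjunct2, THEN conjunct2, THEN conjunct2, THEN conjunct2, THEN conjunct2, THEN conjunct2, THEN conjunct2, THEN conjunct2, THEN conjunct2, THEN conjunct2, THEN conjunct2, THEN conjunct2, THEN conjunct2, THEN conjunct2, THEN conjunct2, THEN conjunct1]
lemmas PNM_MB = ax[THEN conjunct2, THEN conjunct2, THEN conjunct2, THEN conjunct2, THEN conjunct2, THEN conjunct2, THEN conjunct2, THEN conjunct2, THEN conjunct2, THEN conjunct2, THEN conjunct2, THEN conjunct2, THEN conjunct2, THEN conjunct2, THEN conjunct2, THEN conjunct2, THEN conjunct2, THEN conjunct2, THEN conjunct2, THEN conjunct2, THEN conjunct2, THEN conjunct2, THEN conjunct2, THEN conjunct2, THEN conjunct2, THEN conjunct2, THEN conjunct2, THEN conjunct2, THEN conjunct2, THEN conjunct2, THEN conjunct1]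
lemmas PNM_bal = ax[THEN conjunct2, THEN conjunct2, THEN conjunct2, THEN conjunct2, THEN conjunct2, THEN conjunct2, THEN conjunct2, THEN conjunct2, THEN conjunct2, THEN conjunct2, THEN conjunct2, THEN conjunct2, THEN conjunct2, THEN conjunct2, THEN conjunct2, THEN conjunct2, THEN conjunct2, THEN conjunct2, THEN conjunct2, THEN conjunct2, THEN conjunct2, THEN conjunct2, THEN conjunct2, THEN conjunct2, THEN conjunct2, THEN conjunct2, THEN conjunct2, THEN conjunct2, THEN conjunct2, THEN conjunct2, THEN conjunct2, THEN conjunct1]
lemmas assocM = ax[THEN conjunct2, THEN conjunct2, THEN conjunct2, THEN conjunct2, THEN conjunct2, THEN conjunct2, THEN conjunct2, THEN conjunct2, THEN conjunct2, THEN conjunct2, THEN conjunct2, THEN conjunct2, THEN conjunct2, THEN conjunct2, THEN conjunct2, THEN conjunct2, THEN conjunct2, THEN conjunct2, THEN conjunct2, THEN conjunct2, THEN conjunct2, THEN conjunct2, THEN conjunct2, THEN conjunct2, THEN conjunct2, THEN conjunct2, THEN conjunct2, THEN conjunct2, THEN conjunct2, THEN conjunct2, THEN conjunct2, THEN conjunct2, THEN conjunct1]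
lemmas assocN = ax[THEN conjunct2, THEN conjunct2, THEN conjunct2, THEN conjunct2, THEN conjunct2, THEN conjunct2, THEN conjunct2, THEN conjunct2, THEN conjunct2, THEN conjunct2, THEN conjunct2, THEN conjunct2, THEN conjunct2, THEN conjunct2, THEN conjunct2, THEN conjunct2, THEN conjunct2, THEN conjunct2, THEN conjunct2, THEN conjunct2, THEN conjunct2, THEN conjunct2, THEN conjunct2, THEN conjunct2, THEN conjunct2, THEN conjunct2, THEN conjunct2, THEN conjunct2, THEN conjunct2, THEN conjunct2, THEN conjunct2, THEN conjunct2, THEN conjunct2]
lemmas adds[simp] = AM_addL AM_addR MB_addR MB_addL BN_addL BN_addR NA_addR NA_addL PMN_addL PMN_addR PNM_addL PNM_addR AM_one MB_one BN_one NA_one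
lemma tA: "(x::'a) + x = 0 \<Longrightarrow> x = 0" using ax[THEN conjunct1] by blast
lemma tB: "(x::'b) + x = 0 \<Longrightarrow> x = 0" using ax[THEN conjunct2, THEN conjunct1] by blast

lemma z_aux: "(x::'g::ab_group_add) = x + x \<Longrightarrow> x = 0" by (metis add_cancel_right_right)

lemma AM0[simp]: "actAM R a 0 = 0" by (rule z_aux) (metis ax add_0)
lemma A0M[simp]: "actAM R 0 m = 0" by (rule z_aux) (metis ax add_0)
lemma MB0[simp]: "actMB R m 0 = 0" by (rule z_aux) (metis ax add_0)
lemma M0B[simp]: "actMB R 0 b = 0" by (rule z_aux) (metis ax add_0)
lemma BN0[simp]: "actBN R b 0 = 0" by (rule z_aux) (metis ax add_0)
lemma B0N[simp]: "actBN R 0 n = 0" by (rule z_aux) (metis ax add_0)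
lemma NA0[simp]: "actNA R n 0 = 0" by (rule z_aux) (metis ax add_0)
lemma N0A[simp]: "actNA R 0 a = 0" by (rule z_aux) (metis ax add_0)
lemma PMN1[simp]: "pairMN R m 0 = 0" by (rule z_aux) (metis ax add_0)
lemma PMN2[simp]: "pairMN R 0 n = 0" by (rule z_aux) (metis ax add_0)
lemma PNM1[simp]: "pairNM R n 0 = 0" by (rule z_aux) (metis ax add_0)
lemma PNM2[simp]: "pairNM R 0 m = 0" by (rule z_aux) (metis ax add_0)

lemma neg_aux: "(y::'g::ab_group_add) + z = 0 \<Longrightarrow> y = - z" by (simp add: eq_neg_iff_add_eq_0)
lemma neg0[simp]: "actAM R a (- m) = - actAM R a m"
proof -
  have "actAM R a (- m) + actAM R a m = (\<lambda>x. actAM R a x) (- m + m)" by (simp only: adds)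
  then show ?thesis by (intro neg_aux) simp
qed
lemma neg1[simp]: "actAM R (- a) m = - actAM R a m"
proof -
  have "actAM R (- a) m + actAM R a m = (\<lambda>x. actAM R x m) (- a + a)" by (simp only: adds)
  then show ?thesis by (intro neg_aux) simp
qed
lemma neg2[simp]: "actMB R m (- b) = - actMB R m b"
proof -
  have "actMB R m (- b) + actMB R m b = (\<lambda>x. actMB R m x) (- b + b)" by (simp only: adds)
  then show ?thesis by (intro neg_aux) simp
qed
lemma neg3[simp]: "actMB R (- m) b = - actMB R m b"
proof -
  have "actMB R (- m) b + actMB R m b = (\<lambda>x. actMB R x b) (- m + m)" by (simp only: adds)
  then show ?thesis by (intro neg_aux) simp
qed
lemma neg4[simp]: "actBN R b (- n) = - actBN R b n"
proof -
  have "actBN R b (- n) + actBN R b n = (\<lambda>x. actBN R b x) (- n + n)" by (simp only: adds)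
  then show ?thesis by (intro neg_aux) simp
qed
lemma neg5[simp]: "actBN R (- b) n = - actBN R b n"
proof -
  have "actBN R (- b) n + actBN R b n = (\<lambda>x. actBN R x n) (- b + b)" by (simp only: adds)
  then show ?thesis by (intro neg_aux) simp
qed
lemma neg6[simp]: "actNA R n (- a) = - actNA R n a"
proof -
  have "actNA R n (- a) + actNA R n a = (\<lambda>x. actNA R n x) (- a + a)" by (simp only: adds)
  then show ?thesis by (intro neg_aux) simp
qed
lemma neg7[simp]: "actNA R (- n) a = - actNA R n a"
proof -
  have "actNA R (- n) a + actNA R n a = (\<lambda>x. actNA R x a) (- n + n)" by (simp only: adds)
  then show ?thesis by (intro neg_aux) simp
qed
lemma neg8[simp]: "pairMN R m (- n) = - pairMN R m n"
proof -
  have "pairMN R m (- n) + pairMN R m n = (\<lambda>x. pairMN R m x) (- n + n)" by (simp only: adds)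
  then show ?thesis by (intro neg_aux) simp
qed
lemma neg9[simp]: "pairMN R (- m) n = - pairMN R m n"
proof -
  have "pairMN R (- m) n + pairMN R m n = (\<lambda>x. pairMN R x n) (- m + m)" by (simp only: adds)
  then show ?thesis by (intro neg_aux) simp
qed
lemma neg10[simp]: "pairNM R n (- m) = - pairNM R n m"
proof -
  have "pairNM R n (- m) + pairNM R n m = (\<lambda>x. pairNM R n x) (- m + m)" by (simp only: adds)
  then show ?thesis by (intro neg_aux) simp
qed
lemma neg11[simp]: "pairNM R (- n) m = - pairNM R n m"
proof -
  have "pairNM R (- n) m + pairNM R n m = (\<lambda>x. pairNM R x m) (- n + n)" by (simp only: adds)
  then show ?thesis by (intro neg_aux) simp
qed
end

lemma gm_zero: "(0::('a::ab_group_add,'m::ab_group_add,'n::ab_group_add,'b::ab_group_add) gm) = GM 0 0 0 0"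
  by (simp add: zero_gm_def)
lemma gm_plus[simp]: "GM a m n b + GM a' m' n' b' = GM (a+a') (m+m') (n+n') (b+b')"
  by (simp add: plus_gm_def)
lemma gm_minus[simp]: "GM a m n b - GM a' m' n' b' = GM (a-a') (m-m') (n-n') (b-b')"
  by (simp add: minus_gm_def)
lemma gm_uminus[simp]: "- GM a m n b = GM (-a) (-m) (-n) (-b)"
  by (simp add: uminus_gm_def)
lemma gm_eq0[simp]: "(GM a m n b = 0) = (a = 0 \<and> m = 0 \<and> n = 0 \<and> b = 0)"
  by (simp add: zero_gm_def)
lemma gmul_GM: "gmul R (GM a m n b) (GM a' m' n' b') = GM
     (a * a' + pairMN R m n')
     (actAM R a m' + actMB R m b')
     (actBN R b n' + actNA R n a')
     (pairNM R n m' + b * b')"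
  by (simp add: gmul_def)

context gmr begin
lemma gmul_addL: "gmul R (X + Y) Z = gmul R X Z + gmul R Y Z"
  by (cases X; cases Y; cases Z) (simp add: gmul_def distrib_right)
lemma gmul_addR: "gmul R Z (X + Y) = gmul R Z X + gmul R Z Y"
  by (cases X; cases Y; cases Z) (simp add: gmul_def distrib_left)
lemma gmul_negL: "gmul R (- X) Z = - gmul R X Z"
  by (cases X; cases Z) (simp add: gmul_def)
lemma gmul_negR: "gmul R Z (- X) = - gmul R Z X"
  by (cases X; cases Z) (simp add: gmul_def)
lemma gmul_diffL: "gmul R (X - Y) Z = gmul R X Z - gmul R Y Z"
  unfolding diff_conv_add_uminus gmul_addL gmul_negL ..
lemma gmul_diffR: "gmul R Z (X - Y) = gmul R Z X - gmul R Z Y"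
  unfolding diff_conv_add_uminus gmul_addR gmul_negR ..
lemma jordan_addL: "jordan R (X + Y) Z = jordan R X Z + jordan R Y Z"
  by (simp add: jordan_def gmul_addL gmul_addR add_ac)
lemma jordan_addR: "jordan R Z (X + Y) = jordan R Z X + jordan R Z Y"
  by (simp add: jordan_def gmul_addL gmul_addR add_ac)
lemma jordan_diffL: "jordan R (X - Y) Z = jordan R X Z - jordan R Y Z"
  by (simp add: jordan_def gmul_diffL gmul_diffR algebra_simps)
lemma jordan_diffR: "jordan R Z (X - Y) = jordan R Z X - jordan R Z Y"
  by (simp add: jordan_def gmul_diffL gmul_diffR algebra_simps)
end
lemmas S = jordan_def lie_def gmul_GM gP1_def gP2_def gI_def

theorem lemma2p5:
  fixes R :: "('a::ring_1,'m::ab_group_add,'n::ab_group_add,'b::ring_1) gmops"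
    and phi :: "('a,'m,'n,'b) gm \<Rightarrow> ('a,'m,'n,'b) gm"
  assumes "gen_matrix_ring R"
    and "\<forall>X Y. phi (X + Y) = phi X + phi Y"
    and "\<forall>U V. gmul R U V = 0 \<and> gmul R V U = 0 \<longrightarrow> jordan R (phi U) V + jordan R U (phi V) = 0"
  defines "vphi \<equiv> (\<lambda>U. phi U - gmul R (phi gI) U
      + lie R (gmul R (gmul R gP1 (phi gP1)) gP2 + gmul R (gmul R gP2 (phi gP2)) gP1) U)"
  shows "(\<forall>U \<in> corner R gP1 gP1. vphi U \<in> corner R gP1 gP1)
       \<and> (\<forall>U \<in> corner R gP2 gP2. vphi U \<in> corner R gP2 gP2)
       \<and> (\<forall>U \<in> corner R gP1 gP2. gmul R (gmul R gP1 (vphi U)) gP1 = 0 \<and> gmul R (gmul R gP2 (vphi U)) gP2 = 0)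
       \<and> (\<forall>U \<in> corner R gP2 gP1. gmul R (gmul R gP1 (vphi U)) gP1 = 0 \<and> gmul R (gmul R gP2 (vphi U)) gP2 = 0)"
proof -
  interpret gmr R using assms(1) by unfold_locales
  have add: "phi (X + Y) = phi X + phi Y" for X Y using assms(2) by blast
  have Z: "jordan R (phi U) V + jordan R U (phi V) = 0" if "gmul R U V = 0" "gmul R V U = 0" for U V
    using assms(3) that by blast
  obtain a1 m1 n1 b1 where p1: "phi gP1 = GM a1 m1 n1 b1" by (cases "phi gP1")
  obtain a2 m2 n2 b2 where p2: "phi gP2 = GM a2 m2 n2 b2" by (cases "phi gP2")
  have J1: "jordan R (phi gP1) gP2 + jordan R gP1 (phi gP2) = 0" by (rule Z) (simp_all add: S)
  have "a2 + a2 = 0" "b1 + b1 = 0" "m1 + m2 = 0" "n1 + n2 = 0"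
    using J1 unfolding jordan_def p1 p2 by (simp_all add: S)
  then have "a2 = 0" "b1 = 0" "m2 = - m1" "n2 = - n1"
    by (auto intro: tA tB simp: eq_neg_iff_add_eq_0 add.commute)
  then have p1': "phi gP1 = GM a1 m1 n1 0" and p2': "phi gP2 = GM 0 (- m1) (- n1) b2"
    using p1 p2 by auto
  have "phi gI = phi (gP1 + gP2)" by (simp add: S)
  then have pI: "phi gI = GM a1 0 0 b2" by (simp add: add p1' p2')
  have T: "gmul R (gmul R gP1 (phi gP1)) gP2 + gmul R (gmul R gP2 (phi gP2)) gP1 = GM 0 m1 (- n1) 0"
    unfolding p1' p2' by (simp add: S)
  have vphi: "vphi U = phi U - gmul R (GM a1 0 0 b2) U + lie R (GM 0 m1 (- n1) 0) U" for U
    unfolding vphi_def pI T ..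
  have part1: "\<forall>U \<in> corner R gP1 gP1. vphi U \<in> corner R gP1 gP1"
  proof
    fix U assume "U \<in> corner R gP1 gP1"
    then obtain X where "U = gmul R (gmul R gP1 X) gP1" unfolding corner_def by blast
    then have U: "U = GM (g11 X) 0 0 0" by (cases X) (simp add: S)
    define a where "a = g11 X"
    obtain x y z w where pu: "phi U = GM x y z w" by (cases "phi U")
    have J: "jordan R (phi U) gP2 + jordan R U (phi gP2) = 0" by (rule Z) (simp_all add: S U)
    have E: "y - actAM R a m1 = 0" "z - actNA R n1 a = 0" "w + w = 0"
      using J unfolding jordan_def pu p2' unfolding U a_def[symmetric] by (simp_all add: S)
    have "vphi U = GM (x - a1 * a) 0 0 0"
      unfolding vphi pu unfolding U a_def[symmetric] using E tB[OF E(3)] by (simp add: S)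
    then show "vphi U \<in> corner R gP1 gP1" unfolding corner_def
      by (intro CollectI exI[of _ "GM (x - a1 * a) 0 0 0"]) (simp add: S)
  qed
  have part2: "\<forall>U \<in> corner R gP2 gP2. vphi U \<in> corner R gP2 gP2"
  proof
    fix U assume "U \<in> corner R gP2 gP2"
    then obtain X where "U = gmul R (gmul R gP2 X) gP2" unfolding corner_def by blast
    then have U: "U = GM 0 0 0 (g22 X)" by (cases X) (simp add: S)
    define b where "b = g22 X"
    obtain x y z w where pu: "phi U = GM x y z w" by (cases "phi U")
    have J: "jordan R (phi U) gP1 + jordan R U (phi gP1) = 0" by (rule Z) (simp_all add: S U)
    have E: "y + actMB R m1 b = 0" "z + actBN R b n1 = 0" "x + x = 0"
      using J unfolding jordan_def pu p1' unfolding U b_def[symmetric] by (simp_all add: S)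
    have "vphi U = GM 0 0 0 (w - b2 * b)"
      unfolding vphi pu unfolding U b_def[symmetric] using E tA[OF E(3)] by (simp add: S)
    then show "vphi U \<in> corner R gP2 gP2" unfolding corner_def
      by (intro CollectI exI[of _ "GM 0 0 0 (w - b2 * b)"]) (simp add: S)
  qed
  have diff: "phi (X - Y) = phi X - phi Y" for X Y
    using add[of "X - Y" Y] by (simp add: eq_diff_eq)
  have part3: "\<forall>U \<in> corner R gP1 gP2. gmul R (gmul R gP1 (vphi U)) gP1 = 0 \<and> gmul R (gmul R gP2 (vphi U)) gP2 = 0"
  proof
    fix U assume "U \<in> corner R gP1 gP2"
    then obtain X where "U = gmul R (gmul R gP1 X) gP2" unfolding corner_def by blast
    then have U: "U = GM 0 (g12 X) 0 0" by (cases X) (simp add: S)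
    define m where "m = g12 X"
    obtain x y z w where pu: "phi U = GM x y z w" by (cases "phi U")
    have J: "jordan R (phi (gP1 + U)) (gP2 - U) + jordan R (gP1 + U) (phi (gP2 - U)) = 0"
      by (rule Z) (simp_all add: S U)
    have JU: "jordan R (phi U) U + jordan R U (phi U) = 0"
      by (rule Z) (simp_all add: S U)
    have "jordan R (phi (gP1 + U)) (gP2 - U) + jordan R (gP1 + U) (phi (gP2 - U))
      = (jordan R (phi gP1) gP2 + jordan R gP1 (phi gP2))
        + (jordan R (phi U) gP2 - jordan R (phi gP1) U - jordan R gP1 (phi U) + jordan R U (phi gP2))
        - (jordan R (phi U) U + jordan R U (phi U))"
      unfolding add diff jordan_addL jordan_addR jordan_diffL jordan_diffR by (simp add: algebra_simps)
    then have K: "jordan R (phi U) gP2 - jordan R (phi gP1) U - jordan R gP1 (phi U) + jordan R U (phi gP2) = 0"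
      using J J1 JU by simp
    have K': "g11 (jordan R (phi U) gP2 - jordan R (phi gP1) U - jordan R gP1 (phi U) + jordan R U (phi gP2)) = 0"
       "g22 (jordan R (phi U) gP2 - jordan R (phi gP1) U - jordan R gP1 (phi U) + jordan R U (phi gP2)) = 0"
      using K by (simp_all add: gm_zero)
    have c1: "g11 (jordan R (phi U) gP2 - jordan R (phi gP1) U - jordan R gP1 (phi U) + jordan R U (phi gP2))
       = - ((x + pairMN R m n1) + (x + pairMN R m n1))"
      unfolding jordan_def pu p1' p2' unfolding U m_def[symmetric] by (simp add: S add_ac)
    have c2: "g22 (jordan R (phi U) gP2 - jordan R (phi gP1) U - jordan R gP1 (phi U) + jordan R U (phi gP2))
       = (w - pairNM R n1 m) + (w - pairNM R n1 m)"
      unfolding jordan_def pu p1' p2' unfolding U m_def[symmetric] by (simp add: S add_ac)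
    have "x + pairMN R m n1 = 0"
      by (rule tA, subst neg_equal_0_iff_equal[symmetric]) (simp only: c1[symmetric] K'(1))
    then have c1': "x = - pairMN R m n1" by (simp add: eq_neg_iff_add_eq_0)
    have "w - pairNM R n1 m = 0" by (rule tB) (simp only: c2[symmetric] K'(2))
    then have c2': "w = pairNM R n1 m" by simp
    show "gmul R (gmul R gP1 (vphi U)) gP1 = 0 \<and> gmul R (gmul R gP2 (vphi U)) gP2 = 0"
      unfolding vphi pu unfolding U m_def[symmetric] by (simp add: S c1' c2')
  qed
  have part4: "\<forall>U \<in> corner R gP2 gP1. gmul R (gmul R gP1 (vphi U)) gP1 = 0 \<and> gmul R (gmul R gP2 (vphi U)) gP2 = 0"
  proof
    fix U assume "U \<in> corner R gP2 gP1"
    then obtain X where "U = gmul R (gmul R gP2 X) gP1" unfolding corner_def by blast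
    then have U: "U = GM 0 0 (g21 X) 0" by (cases X) (simp add: S)
    define n where "n = g21 X"
    obtain x y z w where pu: "phi U = GM x y z w" by (cases "phi U")
    have J: "jordan R (phi (gP2 + U)) (gP1 - U) + jordan R (gP2 + U) (phi (gP1 - U)) = 0"
      by (rule Z) (simp_all add: S U)
    have JU: "jordan R (phi U) U + jordan R U (phi U) = 0"
      by (rule Z) (simp_all add: S U)
    have J2: "jordan R (phi gP2) gP1 + jordan R gP2 (phi gP1) = 0"
      using J1 by (simp add: jordan_def add_ac)
    have "jordan R (phi (gP2 + U)) (gP1 - U) + jordan R (gP2 + U) (phi (gP1 - U))
      = (jordan R (phi gP2) gP1 + jordan R gP2 (phi gP1))
        + (jordan R (phi U) gP1 - jordan R (phi gP2) U - jordan R gP2 (phi U) + jordan R U (phi gP1))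
        - (jordan R (phi U) U + jordan R U (phi U))"
      unfolding add diff jordan_addL jordan_addR jordan_diffL jordan_diffR by (simp add: algebra_simps)
    then have K: "jordan R (phi U) gP1 - jordan R (phi gP2) U - jordan R gP2 (phi U) + jordan R U (phi gP1) = 0"
      using J J2 JU by simp
    have K': "g11 (jordan R (phi U) gP1 - jordan R (phi gP2) U - jordan R gP2 (phi U) + jordan R U (phi gP1)) = 0"
       "g22 (jordan R (phi U) gP1 - jordan R (phi gP2) U - jordan R gP2 (phi U) + jordan R U (phi gP1)) = 0"
      using K by (simp_all add: gm_zero)
    have c1: "g11 (jordan R (phi U) gP1 - jordan R (phi gP2) U - jordan R gP2 (phi U) + jordan R U (phi gP1))
       = (x + pairMN R m1 n) + (x + pairMN R m1 n)"
      unfolding jordan_def pu p1' p2' unfolding U n_def[symmetric] by (simp add: S add_ac)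
    have c2: "g22 (jordan R (phi U) gP1 - jordan R (phi gP2) U - jordan R gP2 (phi U) + jordan R U (phi gP1))
       = - ((w - pairNM R n m1) + (w - pairNM R n m1))"
      unfolding jordan_def pu p1' p2' unfolding U n_def[symmetric] by (simp add: S add_ac)
    have "x + pairMN R m1 n = 0" by (rule tA) (simp only: c1[symmetric] K'(1))
    then have c1': "x = - pairMN R m1 n" by (simp add: eq_neg_iff_add_eq_0)
    have "w - pairNM R n m1 = 0"
      by (rule tB, subst neg_equal_0_iff_equal[symmetric]) (simp only: c2[symmetric] K'(2))
    then have c2': "w = pairNM R n m1" by simp
    show "gmul R (gmul R gP1 (vphi U)) gP1 = 0 \<and> gmul R (gmul R gP2 (vphi U)) gP2 = 0"
      unfolding vphi pu unfolding U n_def[symmetric] by (simp add: S c1' c2')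
  qed
  show ?thesis using part1 part2 part3 part4 by blast
qed
end
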